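(* Let $d=pq$ with integers $p,q\ge2$, and let $\mathcal{C}$ be any maximally commutative set in $\mathbb{Z}_d\times\mathbb{Z}_d$ containing $(p,0)$ and $(0,q)$ (such sets exist). Then every $(s,t)\in\mathbb{Z}_d\times\mathbb{Z}_d$ with $s$ or $t$ invertible in $\mathbb{Z}_d$ lies outside $\mathcal{C}$. Consequently, if $\mathcal{S}\subseteq\mathbb{Z}_d\times\mathbb{Z}_d$ is a set of generalized Bell states such that every $(m,n)\in\Delta\mathcal{S}$ has $m$ or $n$ invertible in $\mathbb{Z}_d$, then $\Delta\mathcal{S}\cap\mathcal{C}=\emptyset$ and $\mathcal{S}$ is one-way LOCC distinguishable.
   Context: $\mathbb{Z}_d$ is the integers mod $d$. Generalized Bell states in $\mathbb{C}^d\otimes\mathbb{C}^d$ are $|\Psi_{m,n}\rangle=(I\otimes X^mZ^n)\frac1{\sqrt d}\sum_i|ii\rangle$ with $X=\sum_i|i+1\bmod d\rangle\langle i|$, $Z=\sum_i e^{2\pi\sqrt{-1}i/d}|i\rangle\langle i|$, and a set of them is identified with $\mathcal{S}=\{(m_i,n_i)\}_{i=1}^l$. $\Delta\mathcal{S}=\{(m_j-m_i,n_j-n_i)\bmod d:1\le i<j\le l\}$. Pairs $(m,n),(m',n')$ commute if $mn'-nm'\equiv0\pmod d$; a maximally commutative set is a subset whose elements pairwise commute and such that no element outside it commutes with all its elements. *)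

theory Defs
  imports Complex_Main
begin

definition Zd2 :: "int \<Rightarrow> (int \<times> int) set" where
  "Zd2 d = {0..<d} \<times> {0..<d}"

definition commutes :: "int \<Rightarrow> int \<times> int \<Rightarrow> int \<times> int \<Rightarrow> bool" where
  "commutes d x y \<longleftrightarrow> (fst x * snd y - snd x * fst y) mod d = 0"

definition max_commutative :: "int \<Rightarrow> (int \<times> int) set \<Rightarrow> bool" where
  "max_commutative d C \<longleftrightarrow> C \<subseteq> Zd2 d
     \<and> (\<forall>x\<in>C. \<forall>y\<in>C. commutes d x y)
     \<and> (\<forall>z\<in>Zd2 d - C. \<exists>x\<in>C. \<not> commutes d z x)"

definition unit_mod :: "int \<Rightarrow> int \<Rightarrow> bool" where
  "unit_mod d s \<longleftrightarrow> coprime s d"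

definition diff_set :: "int \<Rightarrow> (int \<times> int) list \<Rightarrow> (int \<times> int) set" where
  "diff_set d S = {((fst (S!j) - fst (S!i)) mod d, (snd (S!j) - snd (S!i)) mod d)
                    | i j. i < j \<and> j < length S}"

text \<open>Generalized Bell state |Psi_{m,n}> = (I \<otimes> X^m Z^n) (1/sqrt d) sum_i |ii>,
  as amplitude function of the basis vector |a>|b> (a: Alice, b: Bob).
  Since X^m Z^n |a> = omega^(n a) |a+m mod d>.\<close>
definition bell :: "nat \<Rightarrow> int \<times> int \<Rightarrow> nat \<Rightarrow> nat \<Rightarrow> complex" where
  "bell d mn a b = (1 / complex_of_real (sqrt (real d)))
      * cis (2 * pi * real_of_int (snd mn) * real a / real d)
      * (if int b = (int a + fst mn) mod int d then 1 else 0)"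

definition psd :: "nat \<Rightarrow> (nat \<Rightarrow> nat \<Rightarrow> complex) \<Rightarrow> bool" where
  "psd d A \<longleftrightarrow> (\<forall>v :: nat \<Rightarrow> complex.
      let z = (\<Sum>a<d. \<Sum>c<d. cnj (v a) * A a c * v c) in Im z = 0 \<and> Re z \<ge> 0)"

text \<open>Bob's unnormalized conditional state Tr_A[(A \<otimes> I)|psi><psi|].\<close>
definition bob_state :: "nat \<Rightarrow> (nat \<Rightarrow> nat \<Rightarrow> complex) \<Rightarrow> (nat \<Rightarrow> nat \<Rightarrow> complex)
                         \<Rightarrow> nat \<Rightarrow> nat \<Rightarrow> complex" where
  "bob_state d A psi b b' = (\<Sum>a<d. \<Sum>c<d. A a c * psi c b * cnj (psi a b'))"

text \<open>One-way LOCC (Alice measures first with a POVM, then Bob) perfect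
  distinguishability: after every outcome k, Bob's conditional states of distinct
  members of S are mutually orthogonal (Tr(rho_i rho_j) = 0 for psd operators).\<close>
definition one_way_LOCC_distinguishable :: "nat \<Rightarrow> (int \<times> int) list \<Rightarrow> bool" where
  "one_way_LOCC_distinguishable d S \<longleftrightarrow>
     (\<exists>(K :: nat set) (M :: nat \<Rightarrow> nat \<Rightarrow> nat \<Rightarrow> complex).
        finite K \<and> (\<forall>k\<in>K. psd d (M k))
        \<and> (\<forall>a<d. \<forall>c<d. (\<Sum>k\<in>K. M k a c) = (if a = c then 1 else 0))
        \<and> (\<forall>k\<in>K. \<forall>i<length S. \<forall>j<length S. i \<noteq> j \<longrightarrow>
             (\<Sum>b<d. \<Sum>b'<d. bob_state d (M k) (bell d (S!i)) b b'
                              * bob_state d (M k) (bell d (S!j)) b' b) = 0))"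

end

theory Submission
  imports Defs
begin

definition ee :: "nat \<Rightarrow> int \<Rightarrow> complex" where
  "ee N x = cis (2 * pi * real_of_int x / real N)"

lemma ee_add: "ee N (x + y) = ee N x * ee N y"
  by (simp add: ee_def cis_mult add_divide_distrib distrib_left)

lemma ee_cnj: "cnj (ee N x) = ee N (-x)"
  by (simp add: ee_def cis_cnj)

lemma ee_mult_N: assumes "N > 0" shows "ee N (int N * k) = 1"
proof -
  have "2 * pi * real_of_int (int N * k) / real N = 2 * pi * real_of_int k"
    using assms by simp
  then show ?thesis by (simp add: ee_def)
qed

lemma ee_dvd: "N > 0 \<Longrightarrow> int N dvd x \<Longrightarrow> ee N x = 1"
  using ee_mult_N by (auto elim!: dvdE)

lemma ee_cong: assumes "N > 0" "x mod int N = y mod int N" shows "ee N x = ee N y"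
proof -
  have "int N dvd x - y" using assms(2) by (simp add: mod_eq_dvd_iff)
  then have "ee N (x - y) = 1" using ee_dvd assms(1) by blast
  moreover have "ee N x = ee N (x - y) * ee N y" using ee_add[of N "x - y" y] by simp
  ultimately show ?thesis by simp
qed

lemma ee_eq1: assumes "N > 0" "ee N x = 1" shows "int N dvd x"
proof -
  have "cos (2 * pi * real_of_int x / real N) = 1"
    using assms(2) unfolding ee_def by (metis cis.sel(1) one_complex.sel(1))
  then obtain n :: int where n: "2 * pi * real_of_int x / real N = n * 2 * pi"
    by (auto simp: cos_one_2pi_int)
  then have "real_of_int x = real_of_int (n * int N)" using assms(1)
    by (simp add: field_simps)
  then have "x = n * int N" by linarith
  then show ?thesis by simp
qed

lemma ee_scale: "p > 0 \<Longrightarrow> ee (p * q) (int p * x) = ee q x"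
  by (simp add: ee_def mult.assoc)

lemma ee_pow: "ee N x ^ l = ee N (x * int l)"
  by (simp add: ee_def DeMoivre mult_ac)

lemma geom0: assumes "q > 0" "\<not> int q dvd t" shows "(\<Sum>l<q. ee q (t * int l)) = 0"
proof -
  have z1: "ee q t \<noteq> 1" using ee_eq1 assms by blast
  have zq: "ee q t ^ q = 1" using ee_pow[of q t q] ee_dvd[OF assms(1), of "t * int q"] by simp
  have "(\<Sum>l<q. ee q (t * int l)) = (\<Sum>l<q. ee q t ^ l)" by (simp add: ee_pow)
  also have "\<dots> = 0" using z1 zq by (simp add: sum_gp_strict)
  finally show ?thesis .
qed

lemma geom1: assumes "q > 0" "int q dvd t" shows "(\<Sum>l<q. ee q (t * int l)) = of_nat q"
proof -
  have "\<And>l. ee q (t * int l) = 1" using assms ee_dvd by (simp add: dvd_mult2)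
  then show ?thesis by simp
qed

lemma psd_rank1: "psd d (\<lambda>a c. u a * cnj (u c))"
  unfolding psd_def Let_def
proof (intro allI)
  fix v :: "nat \<Rightarrow> complex"
  define z where "z = (\<Sum>a<d. cnj (v a) * u a)"
  have "(\<Sum>a<d. \<Sum>c<d. cnj (v a) * (u a * cnj (u c)) * v c)
      = (\<Sum>a<d. cnj (v a) * u a) * (\<Sum>c<d. cnj (u c) * v c)"
    by (simp add: sum_product mult_ac)
  also have "(\<Sum>c<d. cnj (u c) * v c) = cnj z" by (simp add: z_def mult.commute)
  finally have "(\<Sum>a<d. \<Sum>c<d. cnj (v a) * (u a * cnj (u c)) * v c)
      = z * cnj z" by (simp add: z_def)
  then have "(\<Sum>a<d. \<Sum>c<d. cnj (v a) * (u a * cnj (u c)) * v c)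
      = complex_of_real ((Re z)\<^sup>2 + (Im z)\<^sup>2)" by (simp only: complex_mult_cnj)
  then show "Im (\<Sum>a<d. \<Sum>c<d. cnj (v a) * (u a * cnj (u c)) * v c) = 0 \<and>
        0 \<le> Re (\<Sum>a<d. \<Sum>c<d. cnj (v a) * (u a * cnj (u c)) * v c)" by simp
qed

lemma bob_rank1: "bob_state d (\<lambda>a c. u a * cnj (u c)) psi b b'
   = (\<Sum>c<d. cnj (u c) * psi c b) * cnj (\<Sum>a<d. cnj (u a) * psi a b')"
proof -
  have "(\<Sum>c<d. cnj (u c) * psi c b) * cnj (\<Sum>a<d. cnj (u a) * psi a b')
     = (\<Sum>a<d. u a * cnj (psi a b')) * (\<Sum>c<d. cnj (u c) * psi c b)"
    by (simp add: mult.commute)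
  also have "\<dots> = (\<Sum>a<d. \<Sum>c<d. u a * cnj (u c) * psi c b * cnj (psi a b'))"
    by (simp add: sum_product mult_ac)
  finally show ?thesis by (simp add: bob_state_def)
qed

lemma trace_rank1: "(\<Sum>b<d. \<Sum>b'<d. (W1 b * cnj (W1 b')) * (W2 b' * cnj (W2 b)))
   = (\<Sum>b<d. W1 b * cnj (W2 b)) * cnj (\<Sum>b<d. W1 b * cnj (W2 b))"
proof -
  have "(\<Sum>b<d. W1 b * cnj (W2 b)) * cnj (\<Sum>b<d. W1 b * cnj (W2 b))
     = (\<Sum>b<d. W1 b * cnj (W2 b)) * (\<Sum>b'<d. cnj (W1 b') * W2 b')" by simp
  also have "\<dots> = (\<Sum>b<d. \<Sum>b'<d. (W1 b * cnj (W1 b')) * (W2 b' * cnj (W2 b)))"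
    by (simp add: sum_product mult_ac)
  finally show ?thesis by simp
qed

definition uu :: "nat \<Rightarrow> nat \<Rightarrow> nat \<Rightarrow> nat \<Rightarrow> complex" where
  "uu p q k c = (if c mod p = k mod p
      then complex_of_real (1 / sqrt (real q)) * ee (p * q) (int (k div p) * int c) else 0)"

lemma W_bell:
  assumes "p > 0" "q > 0" "b < p * q"
  shows "(\<Sum>c<p*q. cnj (uu p q k c) * bell (p*q) mn c b)
    = complex_of_real (1 / sqrt (real (p*q)) * (1 / sqrt (real q))) *
      (if (int b - fst mn) mod int p = int (k mod p)
       then ee (p*q) ((snd mn - int (k div p)) * (int b - fst mn)) else 0)"
proof -
  define d where "d = p * q"
  have d0: "d > 0" using assms by (simp add: d_def)
  define c0 where "c0 = nat ((int b - fst mn) mod int d)"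
  have c0i: "int c0 = (int b - fst mn) mod int d" using d0 by (simp add: c0_def)
  have "(int b - fst mn) mod int d < int d" using d0 by simp
  then have c0d: "c0 < d" using c0i by linarith
  have cond: "(int b = (int c + fst mn) mod int d) \<longleftrightarrow> c = c0" if "c < d" for c
  proof
    assume h: "int b = (int c + fst mn) mod int d"
    have "int c mod int d = (int b - fst mn) mod int d"
      using h by (simp add: mod_diff_left_eq)
    then show "c = c0" using that c0i by simp
  next
    assume "c = c0"
    then have "(int c + fst mn) mod int d = ((int b - fst mn) mod int d + fst mn) mod int d"
      using c0i by simp
    also have "\<dots> = int b mod int d" by (simp add: mod_add_left_eq)
    also have "\<dots> = int b" by (metis assms(3) d_def mod_less of_nat_mod)
    finally show "int b = (int c + fst mn) mod int d" by simp
  qed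
  have bell_eq: "bell d mn c b = (if c = c0 then complex_of_real (1 / sqrt (real d)) * ee d (snd mn * int c) else 0)"
    if "c < d" for c
    using cond[OF that] by (simp add: bell_def ee_def mult.assoc)
  have "(\<Sum>c<d. cnj (uu p q k c) * bell d mn c b)
      = (\<Sum>c<d. if c = c0 then cnj (uu p q k c0) * (complex_of_real (1 / sqrt (real d)) * ee d (snd mn * int c0)) else 0)"
    by (rule sum.cong) (auto simp: bell_eq)
  also have "\<dots> = cnj (uu p q k c0) * (complex_of_real (1 / sqrt (real d)) * ee d (snd mn * int c0))"
    using c0d by simp
  finally have S: "(\<Sum>c<d. cnj (uu p q k c) * bell d mn c b) = cnj (uu p q k c0) * (complex_of_real (1 / sqrt (real d)) * ee d (snd mn * int c0))" .
  have pd: "int p dvd int d" by (simp add: d_def)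
  have modp: "int (c0 mod p) = (int b - fst mn) mod int p"
    using c0i pd by (simp add: of_nat_mod mod_mod_cancel)
  have "(c0 mod p = k mod p) \<longleftrightarrow> (int b - fst mn) mod int p = int (k mod p)"
    using modp by (metis of_nat_eq_iff)
  moreover have "ee d (snd mn * int c0) * ee d (- (int (k div p) * int c0))
      = ee d ((snd mn - int (k div p)) * (int b - fst mn))"
  proof -
    have "ee d (snd mn * int c0) * ee d (- (int (k div p) * int c0)) = ee d ((snd mn - int (k div p)) * int c0)"
      by (simp add: ee_add[symmetric] algebra_simps)
    also have "\<dots> = ee d ((snd mn - int (k div p)) * (int b - fst mn))"
      using d0 c0i by (intro ee_cong) (auto simp: mod_mult_right_eq)
    finally show ?thesis .
  qed
  ultimately show ?thesis
    using S unfolding d_def[symmetric]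
    by (auto simp: uu_def ee_cnj d_def mult_ac)
qed

lemma reidx_set:
  fixes p q r0 :: nat
  assumes "r0 < p" "q > 0"
  shows "{b \<in> {..<p*q}. b mod p = r0} = (\<lambda>l. r0 + p*l) ` {..<q}"
proof (intro equalityI subsetI)
  fix b assume "b \<in> {b \<in> {..<p*q}. b mod p = r0}"
  then have b: "b < p*q" "b mod p = r0" by auto
  have "b = r0 + p * (b div p)" using mod_mult_div_eq[of b p] b(2) by simp
  moreover have "b div p < q" using b(1) by (simp add: less_mult_imp_div_less mult.commute)
  ultimately show "b \<in> (\<lambda>l. r0 + p*l) ` {..<q}" by blast
next
  fix b assume "b \<in> (\<lambda>l. r0 + p*l) ` {..<q}"
  then obtain l where l: "l < q" "b = r0 + p*l" by auto
  have "r0 + p*l < p + p*l" using assms by simp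
  also have "\<dots> = p * (l+1)" by simp
  also have "\<dots> \<le> p * q" using l by (intro mult_le_mono2) simp
  finally show "b \<in> {b \<in> {..<p*q}. b mod p = r0}" using l assms by simp
qed

lemma reidx_sum:
  fixes p q r0 :: nat and f :: "nat \<Rightarrow> 'a::comm_monoid_add"
  assumes "r0 < p" "q > 0"
  shows "(\<Sum>b<p*q. if b mod p = r0 then f b else 0) = (\<Sum>l<q. f (r0 + p*l))"
proof -
  have "(\<Sum>b<p*q. if b mod p = r0 then f b else 0) = sum f {b \<in> {..<p*q}. b mod p = r0}"
    using sum.inter_filter[of "{..<p*q}" f "\<lambda>b. b mod p = r0"] by simp
  also have "\<dots> = sum f ((\<lambda>l. r0 + p*l) ` {..<q})" using reidx_set[OF assms] by simp
  also have "\<dots> = (\<Sum>l<q. f (r0 + p*l))"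
    using assms by (subst sum.reindex) (auto simp: inj_on_def)
  finally show ?thesis .
qed

lemma inner0:
  assumes "p > 0" "q > 0" "r < p"
    and nd: "\<not> (int p dvd m1 - m2 \<and> int q dvd n1 - n2)"
  shows "(\<Sum>b<p*q. (if (int b - m1) mod int p = int r then ee (p*q) ((n1 - j) * (int b - m1)) else 0)
        * cnj (if (int b - m2) mod int p = int r then ee (p*q) ((n2 - j) * (int b - m2)) else 0)) = 0"
proof (cases "int p dvd m1 - m2")
  case False
  have Z: "(if (int b - m1) mod int p = int r then ee (p*q) ((n1 - j) * (int b - m1)) else 0)
        * cnj (if (int b - m2) mod int p = int r then ee (p*q) ((n2 - j) * (int b - m2)) else 0) = 0" for b
  proof -
    have "\<not> ((int b - m1) mod int p = int r \<and> (int b - m2) mod int p = int r)"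
    proof
      assume "(int b - m1) mod int p = int r \<and> (int b - m2) mod int p = int r"
      then have "(int b - m2) mod int p = (int b - m1) mod int p" by simp
      then have "int p dvd (int b - m2) - (int b - m1)" by (simp only: mod_eq_dvd_iff)
      then show False using False by simp
    qed
    then show ?thesis by auto
  qed
  show ?thesis by (simp only: Z sum.neutral_const)
next
  case True
  with nd have nq: "\<not> int q dvd n1 - n2" by simp
  define r0 where "r0 = nat ((int r + m1) mod int p)"
  have r0i: "int r0 = (int r + m1) mod int p" using assms by (simp add: r0_def)
  have r0p: "r0 < p" using r0i assms
    by (metis of_nat_less_iff pos_mod_bound of_nat_0_less_iff)
  have c1: "(int b - m1) mod int p = int r \<longleftrightarrow> b mod p = r0" for b
  proof -
    have "(int b - m1) mod int p = int r \<longleftrightarrow> (int b - m1) mod int p = int r mod int p"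
      using assms by simp
    also have "\<dots> \<longleftrightarrow> int p dvd (int b - m1) - int r" by (simp add: mod_eq_dvd_iff)
    also have "\<dots> \<longleftrightarrow> int p dvd int b - (int r + m1)" by (simp add: algebra_simps)
    also have "\<dots> \<longleftrightarrow> int b mod int p = (int r + m1) mod int p" by (simp add: mod_eq_dvd_iff)
    also have "\<dots> \<longleftrightarrow> int (b mod p) = int r0" using r0i by (simp add: of_nat_mod)
    finally show ?thesis by simp
  qed
  have c2: "(int b - m2) mod int p = int r \<longleftrightarrow> (int b - m1) mod int p = int r" for b
  proof -
    have "int p dvd (int b - m2) - (int b - m1)" using True by simp
    then have "(int b - m2) mod int p = (int b - m1) mod int p" by (simp only: mod_eq_dvd_iff)
    then show ?thesis by simp
  qed
  define C where "C = - (n1 - j) * m1 + (n2 - j) * m2"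
  define t where "t = n1 - n2"
  have ex: "ee (p*q) ((n1 - j) * (int b - m1)) * cnj (ee (p*q) ((n2 - j) * (int b - m2)))
       = ee (p*q) C * ee (p*q) (t * int b)" for b
  proof -
    have "(n1 - j) * (int b - m1) + - ((n2 - j) * (int b - m2)) = C + t * int b"
      by (simp add: C_def t_def algebra_simps)
    then show ?thesis by (simp add: ee_cnj ee_add[symmetric])
  qed
  have "(\<Sum>b<p*q. (if (int b - m1) mod int p = int r then ee (p*q) ((n1 - j) * (int b - m1)) else 0)
        * cnj (if (int b - m2) mod int p = int r then ee (p*q) ((n2 - j) * (int b - m2)) else 0))
     = (\<Sum>b<p*q. if b mod p = r0 then ee (p*q) C * ee (p*q) (t * int b) else 0)"
    by (rule sum.cong) (auto simp: c2 c1 ex)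
  also have "\<dots> = (\<Sum>l<q. ee (p*q) C * ee (p*q) (t * int (r0 + p*l)))"
    by (rule reidx_sum[OF r0p assms(2)])
  also have "\<dots> = (\<Sum>l<q. ee (p*q) C * ee (p*q) (t * int r0) * ee q (t * int l))"
  proof (rule sum.cong)
    fix l
    have "t * int (r0 + p*l) = t * int r0 + int p * (t * int l)" by (simp add: algebra_simps)
    then show "ee (p*q) C * ee (p*q) (t * int (r0 + p*l)) = ee (p*q) C * ee (p*q) (t * int r0) * ee q (t * int l)"
      using assms(1) by (simp add: ee_add ee_scale)
  qed simp
  also have "\<dots> = ee (p*q) C * ee (p*q) (t * int r0) * (\<Sum>l<q. ee q (t * int l))"
    by (simp add: sum_distrib_left)
  also have "\<dots> = 0" using geom0[OF assms(2)] nq by (simp add: t_def)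
  finally show ?thesis .
qed

lemma uu_prod:
  assumes "r < p"
  shows "uu p q (r + p*j) a * cnj (uu p q (r + p*j) c)
     = (if a mod p = r \<and> c mod p = r
        then complex_of_real (1 / real q) * ee (p*q) (int j * (int a - int c)) else 0)"
proof -
  have md: "(r + p*j) mod p = r" "(r + p*j) div p = j" using assms by auto
  have sq: "complex_of_real (1 / sqrt (real q)) * cnj (complex_of_real (1 / sqrt (real q)))
      = complex_of_real (1 / real q)"
    by (simp flip: of_real_mult)
  have e: "ee (p*q) (int j * int a) * cnj (ee (p*q) (int j * int c)) = ee (p*q) (int j * (int a - int c))"
    by (simp add: ee_cnj ee_add[symmetric] algebra_simps)
  show ?thesis
    unfolding uu_def md using sq e
    by (auto simp: mult_ac)
qed

lemma complete:
  fixes p q a c :: nat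
  assumes "p > 0" "q > 0" "a < p*q" "c < p*q"
  shows "(\<Sum>k \<in> (\<lambda>(r,j). r + p*j) ` ({..<p} \<times> {..<q}). uu p q k a * cnj (uu p q k c))
     = (if a = c then 1 else 0)"
proof -
  have inj: "inj_on (\<lambda>(r,j). r + p*j) ({..<p} \<times> {..<q})"
  proof (rule inj_onI)
    fix x y assume h: "x \<in> {..<p} \<times> {..<q}" "y \<in> {..<p} \<times> {..<q}"
      "(\<lambda>(r,j). r + p*j) x = (\<lambda>(r,j). r + p*j) y"
    obtain r j where x: "x = (r,j)" by force
    obtain r' j' where y: "y = (r',j')" by force
    have lt: "r < p" "r' < p" using h x y by auto
    have e: "r + p*j = r' + p*j'" using h(3) x y by simp
    have "(r + p*j) mod p = r" "(r' + p*j') mod p = r'" using lt by simp_all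
    then have rr: "r = r'" using e by metis
    then have "j = j'" using e lt(1) by simp
    then show "x = y" using x y rr by simp
  qed
  define X where "X = (\<Sum>j<q. complex_of_real (1 / real q) * ee (p*q) (int j * (int a - int c)))"
  have "(\<Sum>k \<in> (\<lambda>(r,j). r + p*j) ` ({..<p} \<times> {..<q}). uu p q k a * cnj (uu p q k c))
      = (\<Sum>z \<in> {..<p} \<times> {..<q}. (case z of (r,j) \<Rightarrow> uu p q (r + p*j) a * cnj (uu p q (r + p*j) c)))"
    by (subst sum.reindex[OF inj]) (simp add: comp_def case_prod_beta)
  also have "\<dots> = (\<Sum>r<p. \<Sum>j<q. uu p q (r + p*j) a * cnj (uu p q (r + p*j) c))"
    by (simp add: sum.cartesian_product)
  also have "\<dots> = (\<Sum>r<p. if a mod p = r \<and> c mod p = r then X else 0)"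
  proof (rule sum.cong)
    fix r assume "r \<in> {..<p}"
    then have U: "\<And>j. uu p q (r + p*j) a * cnj (uu p q (r + p*j) c) = (if a mod p = r \<and> c mod p = r
        then complex_of_real (1 / real q) * ee (p*q) (int j * (int a - int c)) else 0)"
      by (intro uu_prod) simp
    then show "(\<Sum>j<q. uu p q (r + p*j) a * cnj (uu p q (r + p*j) c)) = (if a mod p = r \<and> c mod p = r then X else 0)"
      unfolding U by (cases "a mod p = r \<and> c mod p = r") (auto simp: X_def)
  qed simp
  also have "\<dots> = (\<Sum>r<p. if r = a mod p then (if c mod p = a mod p then X else 0) else 0)"
    by (rule sum.cong) auto
  also have "\<dots> = (if c mod p = a mod p then X else 0)"
    using assms(1) by simp
  also have "\<dots> = (if a = c then 1 else 0)"
  proof (cases "c mod p = a mod p")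
    case False
    then show ?thesis by auto
  next
    case True
    then have "int p dvd int a - int c"
      by (metis mod_eq_dvd_iff of_nat_mod)
    then obtain l where l: "int a - int c = int p * l" by (auto elim: dvdE)
    have XX: "X = complex_of_real (1 / real q) * (\<Sum>j<q. ee q (l * int j))"
      unfolding X_def sum_distrib_left
    proof (rule sum.cong)
      fix j
      have eq: "int j * (int a - int c) = int p * (l * int j)" using l by (simp add: algebra_simps)
      have "ee (p*q) (int j * (int a - int c)) = ee q (l * int j)"
        by (simp only: eq ee_scale[OF assms(1)])
      then show "complex_of_real (1 / real q) * ee (p*q) (int j * (int a - int c)) = complex_of_real (1 / real q) * ee q (l * int j)"
        using assms(1) by (simp add: ee_scale)
    qed simp
    show ?thesis
    proof (cases "a = c")
      case True
      then have "l = 0" using l assms(1) by simp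
      then have "X = complex_of_real (1 / real q) * of_nat q" using XX by (simp add: ee_def)
      then show ?thesis using True assms(2) by simp
    next
      case False
      have "\<not> int q dvd l"
      proof
        assume "int q dvd l"
        then have dv: "int (p*q) dvd int a - int c" using l by simp
        have "int a - int c \<noteq> 0" using False by simp
        then have "\<bar>int (p*q)\<bar> \<le> \<bar>int a - int c\<bar>" using dv dvd_imp_le_int by blast
        then show False using assms(3,4) by linarith
      qed
      then have "X = 0" using XX geom0[OF assms(2)] by simp
      then show ?thesis using True False by simp
    qed
  qed
  finally show ?thesis .
qed

lemma locc:
  fixes p q :: nat and S :: "(int \<times> int) list"
  assumes p0: "p > 0" and q0: "q > 0"
    and nd: "\<forall>i<length S. \<forall>j<length S. i \<noteq> j \<longrightarrow>
       \<not> (int p dvd fst (S!i) - fst (S!j) \<and> int q dvd snd (S!i) - snd (S!j))"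
  shows "one_way_LOCC_distinguishable (p*q) S"
proof -
  define K where "K = (\<lambda>(r,j). r + p*j) ` ({..<p} \<times> {..<q})"
  define M where "M = (\<lambda>k a c. uu p q k a * cnj (uu p q k c))"
  define al where "al = complex_of_real (1 / sqrt (real (p*q)) * (1 / sqrt (real q)))"
  define Wf where "Wf k mn b = (if (int b - fst mn) mod int p = int (k mod p)
       then ee (p*q) ((snd mn - int (k div p)) * (int b - fst mn)) else 0)" for k mn b
  have orth: "(\<Sum>b<p*q. \<Sum>b'<p*q. bob_state (p*q) (M k) (bell (p*q) (S!i)) b b'
                              * bob_state (p*q) (M k) (bell (p*q) (S!j)) b' b) = 0"
    if ij: "i < length S" "j < length S" "i \<noteq> j" for k i j
  proof -
    define W1 where "W1 b = (\<Sum>c<p*q. cnj (uu p q k c) * bell (p*q) (S!i) c b)" for b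
    define W2 where "W2 b = (\<Sum>c<p*q. cnj (uu p q k c) * bell (p*q) (S!j) c b)" for b
    have kp: "k mod p < p" using p0 by simp
    have "(\<Sum>b<p*q. W1 b * cnj (W2 b)) = (\<Sum>b<p*q. (al * Wf k (S!i) b) * cnj (al * Wf k (S!j) b))"
      by (rule sum.cong) (simp_all add: W1_def W2_def W_bell[OF p0 q0] al_def Wf_def)
    also have "\<dots> = al * cnj al * (\<Sum>b<p*q. Wf k (S!i) b * cnj (Wf k (S!j) b))"
      by (simp add: sum_distrib_left mult_ac)
    also have "(\<Sum>b<p*q. Wf k (S!i) b * cnj (Wf k (S!j) b)) = 0"
      unfolding Wf_def using inner0[OF p0 q0 kp] nd ij by blast
    finally have I: "(\<Sum>b<p*q. W1 b * cnj (W2 b)) = 0" by simp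
    have "(\<Sum>b<p*q. \<Sum>b'<p*q. bob_state (p*q) (M k) (bell (p*q) (S!i)) b b'
                              * bob_state (p*q) (M k) (bell (p*q) (S!j)) b' b)
        = (\<Sum>b<p*q. \<Sum>b'<p*q. (W1 b * cnj (W1 b')) * (W2 b' * cnj (W2 b)))"
      unfolding M_def bob_rank1 W1_def W2_def by simp
    also have "\<dots> = 0" unfolding trace_rank1 I by simp
    finally show ?thesis .
  qed
  show ?thesis
    unfolding one_way_LOCC_distinguishable_def
  proof (rule exI[of _ K], rule exI[of _ M], intro conjI)
    show "finite K" by (simp add: K_def)
    show "\<forall>k\<in>K. psd (p * q) (M k)" by (simp add: M_def psd_rank1)
    show "\<forall>a<p * q. \<forall>c<p * q. (\<Sum>k\<in>K. M k a c) = (if a = c then 1 else 0)"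
      using complete[OF p0 q0] by (simp add: K_def M_def)
    show "\<forall>k\<in>K. \<forall>i<length S. \<forall>j<length S. i \<noteq> j \<longrightarrow>
        (\<Sum>b<p * q. \<Sum>b'<p * q. bob_state (p * q) (M k) (bell (p * q) (S ! i)) b b' *
            bob_state (p * q) (M k) (bell (p * q) (S ! j)) b' b) = 0"
      using orth by blast
  qed
qed

lemma unit_no_dvd:
  fixes a :: nat and D s :: int
  assumes "a \<ge> 2" "int a dvd s" "int a dvd D" "unit_mod D s"
  shows False
proof -
  have "is_unit (int a)" using assms coprime_common_divisor unfolding unit_mod_def by blast
  then have "int a dvd 1" by simp
  then have "int a \<le> 1" by (simp add: zdvd_imp_le)
  then show False using assms(1) by simp
qed

lemma pair_bad:
  fixes p q :: nat and m n :: int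
  assumes "p \<ge> 2" "q \<ge> 2" "int p dvd m" "int q dvd n"
    "unit_mod (int (p*q)) (m mod int (p*q)) \<or> unit_mod (int (p*q)) (n mod int (p*q))"
  shows False
proof -
  have pd: "int p dvd int (p*q)" and qd: "int q dvd int (p*q)" by simp_all
  have "int p dvd m mod int (p*q)" using assms(3) pd by (simp add: dvd_mod_iff)
  moreover have "int q dvd n mod int (p*q)" using assms(4) qd by (simp add: dvd_mod_iff)
  ultimately show False using assms(1,2,5) unit_no_dvd pd qd by blast
qed

lemma in_C_dvd:
  fixes p q :: nat
  assumes "p > 0" "q > 0" "max_commutative (int (p*q)) C" "(int p, 0) \<in> C" "(0, int q) \<in> C"
    "(s, t) \<in> C"
  shows "int p dvd s \<and> int q dvd t"
proof -
  have c1: "commutes (int (p*q)) (s,t) (int p, 0)" and c2: "commutes (int (p*q)) (s,t) (0, int q)"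
    using assms(3-6) unfolding max_commutative_def by blast+
  from c1 have "int (p*q) dvd - (t * int p)" by (simp add: commutes_def dvd_eq_mod_eq_0)
  then have "int q * int p dvd t * int p" by (simp add: mult.commute)
  then have t: "int q dvd t" using assms(1) by (simp add: dvd_mult_cancel_right)
  from c2 have "int (p*q) dvd s * int q" by (simp add: commutes_def dvd_eq_mod_eq_0)
  then have "int p * int q dvd s * int q" by simp
  then have "int p dvd s" using assms(2) by (simp add: dvd_mult_cancel_right)
  with t show ?thesis by simp
qed

lemma exists_C:
  fixes p q :: nat
  assumes "p \<ge> 2" "q \<ge> 2"
  shows "\<exists>C. max_commutative (int (p*q)) C \<and> (int p, 0) \<in> C \<and> (0, int q) \<in> C"
proof -
  define d where "d = int (p*q)"
  define C where "C = {z \<in> Zd2 d. int p dvd fst z \<and> int q dvd snd z}"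
  have pl: "int p < d" and ql: "int q < d"
  proof -
    have "p * 1 < p * q" "1 * q < p * q" using assms by (intro mult_strict_left_mono mult_strict_right_mono; simp)+
    then show "int p < d" "int q < d" by (simp_all add: d_def)
  qed
  have pC: "(int p, 0) \<in> C" and qC: "(0, int q) \<in> C"
    using pl ql by (auto simp: C_def Zd2_def)
  have comm: "commutes d x y" if xy: "x \<in> C" "y \<in> C" for x y
  proof -
    have dv: "int p dvd fst x" "int q dvd snd x" "int p dvd fst y" "int q dvd snd y"
      using xy by (auto simp: C_def)
    obtain a where "fst x = int p * a" using dv(1) by (auto elim: dvdE)
    moreover obtain b where "snd x = int q * b" using dv(2) by (auto elim: dvdE)
    moreover obtain a' where "fst y = int p * a'" using dv(3) by (auto elim: dvdE)
    moreover obtain b' where "snd y = int q * b'" using dv(4) by (auto elim: dvdE)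
    ultimately have "fst x * snd y - snd x * fst y = d * (a * b' - b * a')"
      by (simp add: d_def algebra_simps)
    then show ?thesis by (simp add: commutes_def)
  qed
  have maxl: "\<exists>x\<in>C. \<not> commutes d z x" if "z \<in> Zd2 d - C" for z
  proof -
    obtain s t where z: "z = (s,t)" by force
    have nz: "\<not> (int p dvd s \<and> int q dvd t)" using that z by (auto simp: C_def)
    show ?thesis
    proof (cases "int p dvd s")
      case False
      have "\<not> commutes d (s,t) (0, int q)"
      proof
        assume "commutes d (s,t) (0, int q)"
        then have "int p * int q dvd s * int q" by (simp add: commutes_def dvd_eq_mod_eq_0 d_def)
        then show False using False assms by (simp add: dvd_mult_cancel_right)
      qed
      then show ?thesis using qC z by blast
    next
      case True
      then have nt: "\<not> int q dvd t" using nz by simp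
      have "\<not> commutes d (s,t) (int p, 0)"
      proof
        assume "commutes d (s,t) (int p, 0)"
        then have "int (p*q) dvd - (t * int p)" by (simp add: commutes_def dvd_eq_mod_eq_0 d_def)
        then have "int q * int p dvd t * int p" by (simp add: mult.commute)
        then show False using nt assms by (simp add: dvd_mult_cancel_right)
      qed
      then show ?thesis using pC z by blast
    qed
  qed
  have "max_commutative d C"
    unfolding max_commutative_def using comm maxl by (auto simp: C_def)
  then show ?thesis using pC qC d_def by blast
qed

theorem mainTheorem8:
  fixes p q :: nat
  assumes "p \<ge> 2" and "q \<ge> 2"
  shows "(\<exists>C. max_commutative (int (p*q)) C \<and> (int p, 0) \<in> C \<and> (0, int q) \<in> C)
    \<and> (\<forall>C. max_commutative (int (p*q)) C \<and> (int p, 0) \<in> C \<and> (0, int q) \<in> C \<longrightarrow>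
         (\<forall>s t. (s, t) \<in> Zd2 (int (p*q)) \<and> (unit_mod (int (p*q)) s \<or> unit_mod (int (p*q)) t)
                  \<longrightarrow> (s, t) \<notin> C)
       \<and> (\<forall>S :: (int \<times> int) list. distinct S \<and> set S \<subseteq> Zd2 (int (p*q))
            \<and> (\<forall>(m, n) \<in> diff_set (int (p*q)) S. unit_mod (int (p*q)) m \<or> unit_mod (int (p*q)) n)
            \<longrightarrow> diff_set (int (p*q)) S \<inter> C = {} \<and> one_way_LOCC_distinguishable (p*q) S))"
proof -
  have p0: "p > 0" and q0: "q > 0" using assms by auto
  have part2: "(\<forall>s t. (s, t) \<in> Zd2 (int (p*q)) \<and> (unit_mod (int (p*q)) s \<or> unit_mod (int (p*q)) t)
                  \<longrightarrow> (s, t) \<notin> C)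
       \<and> (\<forall>S :: (int \<times> int) list. distinct S \<and> set S \<subseteq> Zd2 (int (p*q))
            \<and> (\<forall>(m, n) \<in> diff_set (int (p*q)) S. unit_mod (int (p*q)) m \<or> unit_mod (int (p*q)) n)
            \<longrightarrow> diff_set (int (p*q)) S \<inter> C = {} \<and> one_way_LOCC_distinguishable (p*q) S)"
    if C: "max_commutative (int (p*q)) C" "(int p, 0) \<in> C" "(0, int q) \<in> C" for C
  proof -
    have notC: "(s, t) \<notin> C" if "unit_mod (int (p*q)) s \<or> unit_mod (int (p*q)) t" for s t
    proof
      assume "(s,t) \<in> C"
      then have "int p dvd s \<and> int q dvd t" using in_C_dvd[OF p0 q0 C] by blast
      then show False using that assms unit_no_dvd[of p s "int (p*q)"] unit_no_dvd[of q t "int (p*q)"]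
        by auto
    qed
    have part3: "diff_set (int (p*q)) S \<inter> C = {} \<and> one_way_LOCC_distinguishable (p*q) S"
      if S: "\<forall>(m, n) \<in> diff_set (int (p*q)) S. unit_mod (int (p*q)) m \<or> unit_mod (int (p*q)) n"
      for S :: "(int \<times> int) list"
    proof
      show "diff_set (int (p*q)) S \<inter> C = {}"
      proof (rule ccontr)
        assume "diff_set (int (p*q)) S \<inter> C \<noteq> {}"
        then obtain m n where "(m,n) \<in> diff_set (int (p*q)) S" "(m,n) \<in> C" by auto
        then show False using S notC by blast
      qed
      have bad: False if ij: "i < j" "j < length S"
          and dv: "int p dvd fst (S!i) - fst (S!j)" "int q dvd snd (S!i) - snd (S!j)" for i j
      proof -
        have mem: "((fst (S!j) - fst (S!i)) mod int (p*q), (snd (S!j) - snd (S!i)) mod int (p*q))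
            \<in> diff_set (int (p*q)) S"
          unfolding diff_set_def using ij by blast
        have "int p dvd fst (S!j) - fst (S!i)" "int q dvd snd (S!j) - snd (S!i)"
          using dv by (simp_all add: dvd_diff_commute)
        then show False using pair_bad[OF assms] S mem by fastforce
      qed
      show "one_way_LOCC_distinguishable (p*q) S"
      proof (rule locc[OF p0 q0], intro allI impI notI)
        fix i j assume h: "i < length S" "j < length S" "i \<noteq> j"
          "int p dvd fst (S!i) - fst (S!j) \<and> int q dvd snd (S!i) - snd (S!j)"
        show False
        proof (cases "i < j")
          case True
          then show False using bad h by blast
        next
          case False
          then have "j < i" using h(3) by simp
          moreover have "int p dvd fst (S!j) - fst (S!i)" "int q dvd snd (S!j) - snd (S!i)"
            using h(4) by (simp_all add: dvd_diff_commute)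
          ultimately show False using bad h by blast
        qed
      qed
    qed
    show ?thesis using notC part3 by blast
  qed
  show ?thesis using exists_C[OF assms] part2 by blast
qed

end
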